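(* Let $k:\mathbb{R}^D\times\mathbb{R}^D\to\mathbb{R}$ be a translation-invariant positive definite kernel with $k(x,x)=1$ for all $x$ and $0\le k(x,x')\le 1$, and let $0<\rho<1$. Let $X=\{x_1,\dots,x_N\}\subset\mathbb{R}^D$ be a dataset, and let $Z=\{Z_1,\dots,Z_M\}\subseteq X$ be the set of inducing point locations obtained by processing $x_1,\dots,x_N$ sequentially with the Online Inducing Point Selection procedure (defined in the context) with threshold $\rho$, where the first point is always selected. Assume $K_Z$ is invertible. Then $$\|K_X-Q_X\|\le (N-M)\left(1-\frac{\rho^2}{1+M(M-1)\rho}\right),$$ where $\|\cdot\|$ denotes the Frobenius norm.
   Context: Online Inducing Point Selection (OIPS): given a kernel $k$, a threshold $0<\rho<1$ and a current set of inducing point locations $Z=\{Z_1,\dots,Z_M\}\subset\mathbb{R}^D$, when a new sample $x$ arrives one computes $d=\max_{j} k(x,Z_j)$; if $d<\rho$ (or if $Z$ is empty), then $x$ is added to $Z$ (so $M$ increases by one), otherwise $Z$ is left unchanged. Samples are processed one at a time, each exactly once. Notation: for finite sets $A,B$ of points, $K_{AB}$ is the matrix $(k(a,b))_{a\in A,b\in B}$ and $K_A=K_{AA}$; $K_X$ is the $N\times N$ kernel matrix on the dataset and $Q_X=K_{XZ}K_Z^{-1}K_{ZX}$ is the Nyström approximation of $K_X$ using the subset $Z$. *)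

theory Defs
  imports "HOL-Analysis.Analysis" "Jordan_Normal_Form.Matrix"
begin

text \<open>Positive definite kernel (in the machine-learning sense: symmetric and every
  Gram matrix is positive semidefinite).\<close>
definition pd_kernel :: "('a \<Rightarrow> 'a \<Rightarrow> real) \<Rightarrow> bool" where
  "pd_kernel k \<longleftrightarrow> (\<forall>x y. k x y = k y x) \<and>
     (\<forall>(xs :: 'a list) (c :: nat \<Rightarrow> real).
        (\<Sum>i<length xs. \<Sum>j<length xs. c i * c j * k (xs ! i) (xs ! j)) \<ge> 0)"

definition translation_invariant :: "('a::real_vector \<Rightarrow> 'a \<Rightarrow> real) \<Rightarrow> bool" where
  "translation_invariant k \<longleftrightarrow> (\<forall>x y h. k (x + h) (y + h) = k x y)"

definition oips_step :: "('a \<Rightarrow> 'a \<Rightarrow> real) \<Rightarrow> real \<Rightarrow> 'a list \<Rightarrow> 'a \<Rightarrow> 'a list" where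
  "oips_step k \<rho> Z x =
     (if Z = [] \<or> Max (set (map (k x) Z)) < \<rho> then Z @ [x] else Z)"

definition oips :: "('a \<Rightarrow> 'a \<Rightarrow> real) \<Rightarrow> real \<Rightarrow> 'a list \<Rightarrow> 'a list" where
  "oips k \<rho> xs = foldl (oips_step k \<rho>) [] xs"

definition kmat :: "('a \<Rightarrow> 'a \<Rightarrow> real) \<Rightarrow> 'a list \<Rightarrow> 'a list \<Rightarrow> real mat" where
  "kmat k A B = mat (length A) (length B) (\<lambda>(i, j). k (A ! i) (B ! j))"

definition inv_mat :: "real mat \<Rightarrow> real mat" where
  "inv_mat A = (SOME B. inverts_mat A B \<and> inverts_mat B A)"

definition nystrom :: "('a \<Rightarrow> 'a \<Rightarrow> real) \<Rightarrow> 'a list \<Rightarrow> 'a list \<Rightarrow> real mat" where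
  "nystrom k X Z = kmat k X Z * inv_mat (kmat k Z Z) * kmat k Z X"

definition frobenius_norm :: "real mat \<Rightarrow> real" where
  "frobenius_norm A = sqrt (\<Sum>i<dim_row A. \<Sum>j<dim_col A. (A $$ (i, j))\<^sup>2)"

end

theory Submission
  imports Defs
begin

lemma quad_disc:
  fixes a b c :: real
  assumes h: "\<And>t. 0 \<le> a + 2*b*t + c*t^2"
  shows "b^2 \<le> a*c"
proof -
  have a0: "0 \<le> a" using h[of 0] by simp
  have hs: "0 \<le> a + c*t^2" for t using h[of t] h[of "-t"] by simp
  show ?thesis
  proof (cases "c > 0")
    case True
    have "0 \<le> a + 2*b*(-b/c) + c*(-b/c)^2" by (rule h)
    also have "\<dots> = a - b^2/c" using True by (simp add: power2_eq_square field_simps)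
    finally show ?thesis using True by (simp add: field_simps)
  next
    case False
    show ?thesis
    proof (cases "c = 0")
      case True
      show ?thesis
      proof (cases "b = 0")
        case True then show ?thesis using a0 \<open>c=0\<close> by simp
      next
        case False
        have "0 \<le> a + 2*b*(-(a+1)/(2*b)) + c*(-(a+1)/(2*b))^2" by (rule h)
        also have "\<dots> = -1" using False \<open>c=0\<close> by (simp add: field_simps)
        finally show ?thesis by simp
      qed
    next
      case False
      hence cn: "c < 0" using \<open>\<not> c > 0\<close> by simp
      have "0 \<le> a + c * (sqrt ((a+1)/(-c)))^2" by (rule hs)
      also have "\<dots> = -1" using cn a0 by (simp add: field_simps)
      finally show ?thesis by simp
    qed
  qed
qed

lemma form_cs:
  fixes A :: "nat \<Rightarrow> nat \<Rightarrow> real"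
  assumes psd: "\<And>c. 0 \<le> (\<Sum>i<n. \<Sum>j<n. c i * c j * A i j)"
    and sym: "\<And>i j. i<n \<Longrightarrow> j<n \<Longrightarrow> A i j = A j i"
  shows "(\<Sum>i<n. \<Sum>j<n. x i * y j * A i j)^2 \<le>
     (\<Sum>i<n. \<Sum>j<n. x i * x j * A i j) * (\<Sum>i<n. \<Sum>j<n. y i * y j * A i j)"
proof -
  let ?F = "\<lambda>x y. (\<Sum>i<n. \<Sum>j<n. x i * y j * A i j)"
  have swap: "?F y x = ?F x y"
  proof -
    have "?F y x = (\<Sum>j<n. \<Sum>i<n. y i * x j * A i j)" by (rule sum.swap)
    also have "\<dots> = ?F x y" by (intro sum.cong refl) (simp add: sym mult.commute)
    finally show ?thesis .
  qed
  have "0 \<le> ?F x x + 2 * ?F x y * t + ?F y y * t^2" for t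
  proof -
    have "0 \<le> (\<Sum>i<n. \<Sum>j<n. (x i + t * y i) * (x j + t * y j) * A i j)" by (rule psd)
    also have "\<dots> = ?F x x + t * (?F x y + ?F y x) + t^2 * ?F y y"
      by (simp add: algebra_simps power2_eq_square sum.distrib sum_distrib_left)
    finally show ?thesis using swap by (simp add: algebra_simps)
  qed
  thus ?thesis using quad_disc by blast
qed

lemma oips_snoc: "oips k \<rho> (xs @ [x]) = oips_step k \<rho> (oips k \<rho> xs) x"
  by (simp add: oips_def)

lemma oips_inv:
  assumes sym: "\<And>x y. k x y = k y x" and d: "distinct xs"
  shows "set (oips k \<rho> xs) \<subseteq> set xs \<and> distinct (oips k \<rho> xs) \<and>
    (\<forall>z1\<in>set (oips k \<rho> xs). \<forall>z2\<in>set (oips k \<rho> xs). z1 \<noteq> z2 \<longrightarrow> k z1 z2 < \<rho>) \<and>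
    (\<forall>y\<in>set xs. y \<notin> set (oips k \<rho> xs) \<longrightarrow> (\<exists>z\<in>set (oips k \<rho> xs). \<rho> \<le> k y z))"
  using d
proof (induction xs rule: rev_induct)
  case Nil
  then show ?case by (simp add: oips_def)
next
  case (snoc x xs)
  define Z where "Z = oips k \<rho> xs"
  have IH: "set Z \<subseteq> set xs \<and> distinct Z \<and>
    (\<forall>z1\<in>set Z. \<forall>z2\<in>set Z. z1 \<noteq> z2 \<longrightarrow> k z1 z2 < \<rho>) \<and>
    (\<forall>y\<in>set xs. y \<notin> set Z \<longrightarrow> (\<exists>z\<in>set Z. \<rho> \<le> k y z))"
    using snoc by (simp add: Z_def)
  have xn: "x \<notin> set xs" using snoc.prems by simp
  have eq: "oips k \<rho> (xs @ [x]) = oips_step k \<rho> Z x" by (simp add: oips_snoc Z_def)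
  show ?case
  proof (cases "Z = [] \<or> Max (set (map (k x) Z)) < \<rho>")
    case True
    have lt: "\<forall>z\<in>set Z. k x z < \<rho>"
    proof (cases "Z = []")
      case False
      then have "Max (k x ` set Z) < \<rho>" using True by simp
      then show ?thesis using False by (simp add: Max_less_iff)
    qed simp
    have st: "oips_step k \<rho> Z x = Z @ [x]" using True by (simp add: oips_step_def)
    show ?thesis unfolding eq st using IH xn lt sym by fastforce
  next
    case False
    have st: "oips_step k \<rho> Z x = Z" using False by (simp add: oips_step_def)
    have ne: "Z \<noteq> []" using False by simp
    have "Max (k x ` set Z) \<in> k x ` set Z" using ne by (intro Max_in) auto
    moreover have "\<rho> \<le> Max (k x ` set Z)" using False by simp
    ultimately have "\<exists>z\<in>set Z. \<rho> \<le> k x z" by auto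
    then show ?thesis unfolding eq st using IH by auto
  qed
qed

lemma ind_form:
  fixes D :: "nat \<Rightarrow> nat \<Rightarrow> real"
  assumes "i < n" "j < n"
  shows "(\<Sum>l<n. \<Sum>m<n. (if l = i then 1 else 0) * (if m = j then 1 else 0) * D l m) = D i j"
  using assms by (simp add: if_distrib[of "\<lambda>x. x * _"] sum.If_cases Int_absorb1 cong: if_cong)

lemma frob_le_trace:
  fixes D :: "nat \<Rightarrow> nat \<Rightarrow> real"
  assumes psd: "\<And>c. 0 \<le> (\<Sum>i<n. \<Sum>j<n. c i * c j * D i j)"
    and sym: "\<And>i j. i<n \<Longrightarrow> j<n \<Longrightarrow> D i j = D j i"
  shows "sqrt (\<Sum>i<n. \<Sum>j<n. (D i j)^2) \<le> (\<Sum>i<n. D i i)"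
proof -
  let ?e = "\<lambda>i l. if l = i then 1 else (0::real)"
  have dnn: "0 \<le> D i i" if "i < n" for i
    using psd[of "?e i"] ind_form[OF that that, of D] by simp
  have ent: "(D i j)^2 \<le> D i i * D j j" if "i < n" "j < n" for i j
    using form_cs[OF psd sym, of "?e i" "?e j"] ind_form[of _ n _ D] that by simp
  have "(\<Sum>i<n. \<Sum>j<n. (D i j)^2) \<le> (\<Sum>i<n. \<Sum>j<n. D i i * D j j)"
    by (intro sum_mono) (simp add: ent)
  also have "\<dots> = (\<Sum>i<n. D i i)^2"
    by (simp add: power2_eq_square sum_product)
  finally have "sqrt (\<Sum>i<n. \<Sum>j<n. (D i j)^2) \<le> sqrt ((\<Sum>i<n. D i i)^2)"
    using real_sqrt_le_mono by blast
  also have "\<dots> = (\<Sum>i<n. D i i)" using sum_nonneg[of "{..<n}" "\<lambda>i. D i i"] dnn by (simp add: sum_nonneg)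
  finally show ?thesis .
qed

lemma delta_sum_r:
  fixes f :: "nat \<Rightarrow> real"
  assumes "b < n"
  shows "(\<Sum>c<n. f c * (if c = b then 1 else 0)) = f b"
proof -
  have "(\<Sum>c<n. f c * (if c = b then 1 else 0)) = (\<Sum>c<n. if c = b then f c else 0)"
    by (intro sum.cong) auto
  then show ?thesis using assms by simp
qed

lemma delta_sum_l:
  fixes f :: "nat \<Rightarrow> real"
  assumes "b < n"
  shows "(\<Sum>c<n. (if b = c then 1 else 0) * f c) = f b"
proof -
  have "(\<Sum>c<n. (if b = c then 1 else 0) * f c) = (\<Sum>c<n. if b = c then f c else 0)"
    by (intro sum.cong) auto
  then show ?thesis using assms by simp
qed

lemma sum_split_add:
  fixes f :: "nat \<Rightarrow> real"
  shows "(\<Sum>l<N+M. f l) = (\<Sum>l<N. f l) + (\<Sum>a<M. f (N+a))"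
  by (induction M) auto

context
  fixes k :: "'a \<Rightarrow> 'a \<Rightarrow> real" and Z :: "'a list" and G :: "nat \<Rightarrow> nat \<Rightarrow> real"
  assumes pd: "pd_kernel k"
    and BG: "\<And>a c. a < length Z \<Longrightarrow> c < length Z \<Longrightarrow>
       (\<Sum>b<length Z. k (Z!a) (Z!b) * G b c) = (if a = c then 1 else 0)"
    and GB: "\<And>a c. a < length Z \<Longrightarrow> c < length Z \<Longrightarrow>
       (\<Sum>b<length Z. G a b * k (Z!b) (Z!c)) = (if a = c then 1 else 0)"
begin

lemma ksym: "k x y = k y x" using pd unfolding pd_kernel_def by blast

lemma Gsym:
  assumes "a < length Z" "b < length Z"
  shows "G a b = G b a"
proof -
  let ?M = "length Z"
  have "G b a = (\<Sum>c<?M. G c a * (if c = b then 1 else 0))"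
    using delta_sum_r[OF assms(2), of "\<lambda>c. G c a"] by simp
  also have "\<dots> = (\<Sum>c<?M. G c a * (\<Sum>d<?M. k (Z!c) (Z!d) * G d b))"
    by (intro sum.cong refl) (simp add: BG assms)
  also have "\<dots> = (\<Sum>c<?M. \<Sum>d<?M. G c a * k (Z!c) (Z!d) * G d b)"
    by (simp add: sum_distrib_left mult.assoc)
  also have "\<dots> = (\<Sum>d<?M. \<Sum>c<?M. G c a * k (Z!c) (Z!d) * G d b)"
    by (rule sum.swap)
  also have "\<dots> = (\<Sum>d<?M. \<Sum>c<?M. k (Z!d) (Z!c) * G c a * G d b)"
    by (intro sum.cong refl) (simp add: ksym[of "Z!_" "Z!_"] mult_ac)
  also have "\<dots> = (\<Sum>d<?M. (\<Sum>c<?M. k (Z!d) (Z!c) * G c a) * G d b)"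
    by (simp add: sum_distrib_right)
  also have "\<dots> = (\<Sum>d<?M. (if d = a then 1 else 0) * G d b)"
    by (intro sum.cong refl) (simp add: BG assms)
  also have "\<dots> = G a b" using delta_sum_l[OF assms(1), of "\<lambda>d. G d b"] by (simp add: eq_commute)
  finally show ?thesis by simp
qed

lemma BGv:
  assumes "a < length Z"
  shows "(\<Sum>b<length Z. k (Z!a) (Z!b) * (\<Sum>c<length Z. G b c * v c)) = v a"
proof -
  let ?M = "length Z"
  have "(\<Sum>b<?M. k (Z!a) (Z!b) * (\<Sum>c<?M. G b c * v c))
      = (\<Sum>b<?M. \<Sum>c<?M. k (Z!a) (Z!b) * G b c * v c)"
    by (simp add: sum_distrib_left mult.assoc)
  also have "\<dots> = (\<Sum>c<?M. \<Sum>b<?M. k (Z!a) (Z!b) * G b c * v c)" by (rule sum.swap)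
  also have "\<dots> = (\<Sum>c<?M. (if a = c then 1 else 0) * v c)"
    by (intro sum.cong refl) (simp add: BG[symmetric] assms sum_distrib_right)
  also have "\<dots> = v a" using delta_sum_l[OF assms] .
  finally show ?thesis .
qed

lemma psdB: "0 \<le> (\<Sum>a<length Z. \<Sum>b<length Z. c a * c b * k (Z!a) (Z!b))"
  using pd unfolding pd_kernel_def by blast


lemma quad_swap:
  fixes f :: "nat \<Rightarrow> nat \<Rightarrow> nat \<Rightarrow> nat \<Rightarrow> real"
  shows "(\<Sum>i<n1. \<Sum>j<n2. \<Sum>a<n3. \<Sum>b<n4. f i j a b) = (\<Sum>a<n3. \<Sum>b<n4. \<Sum>i<n1. \<Sum>j<n2. f i j a b)"
proof -
  have "(\<Sum>i<n1. \<Sum>j<n2. \<Sum>a<n3. \<Sum>b<n4. f i j a b) = (\<Sum>i<n1. \<Sum>a<n3. \<Sum>j<n2. \<Sum>b<n4. f i j a b)"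
    by (rule sum.cong[OF refl]) (rule sum.swap)
  also have "\<dots> = (\<Sum>a<n3. \<Sum>i<n1. \<Sum>j<n2. \<Sum>b<n4. f i j a b)" by (rule sum.swap)
  also have "\<dots> = (\<Sum>a<n3. \<Sum>i<n1. \<Sum>b<n4. \<Sum>j<n2. f i j a b)"
    by (rule sum.cong[OF refl], rule sum.cong[OF refl]) (rule sum.swap)
  also have "\<dots> = (\<Sum>a<n3. \<Sum>b<n4. \<Sum>i<n1. \<Sum>j<n2. f i j a b)"
    by (rule sum.cong[OF refl]) (rule sum.swap)
  finally show ?thesis .
qed

definition Qf where
  "Qf xs i j = (\<Sum>a<length Z. \<Sum>b<length Z. k (xs!i) (Z!a) * G a b * k (Z!b) (xs!j))"

lemma psdD:
  "0 \<le> (\<Sum>i<length xs. \<Sum>j<length xs. c i * c j * (k (xs!i) (xs!j) - Qf xs i j))"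
proof -
  define N where "N = length xs"
  define M where "M = length Z"
  define u where "u a = (\<Sum>j<N. c j * k (Z!a) (xs!j))" for a
  define w where "w a = (\<Sum>b<M. G a b * u b)" for a
  define d where "d l = (if l < N then c l else - w (l - N))" for l
  define L where "L = xs @ Z"
  have lenL: "length L = N + M" by (simp add: L_def N_def M_def)
  have "0 \<le> (\<Sum>l<length L. \<Sum>m<length L. d l * d m * k (L!l) (L!m))"
    using pd unfolding pd_kernel_def by blast
  also have "\<dots> = (\<Sum>i<N. \<Sum>j<N. c i * c j * k (xs!i) (xs!j))
      - (\<Sum>i<N. \<Sum>b<M. c i * w b * k (xs!i) (Z!b))
      - (\<Sum>a<M. \<Sum>j<N. w a * c j * k (Z!a) (xs!j))
      + (\<Sum>a<M. \<Sum>b<M. w a * w b * k (Z!a) (Z!b))" (is "_ = ?T1 - ?T2 - ?T3 + ?T4")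
    unfolding lenL sum_split_add
    by (simp add: d_def L_def nth_append N_def sum.distrib sum_subtractf sum_negf)
  also have T3: "?T3 = (\<Sum>a<M. w a * u a)"
    by (simp add: u_def sum_distrib_left mult.assoc)
  also have "?T2 = (\<Sum>a<M. w a * u a)"
  proof -
    have "?T2 = (\<Sum>b<M. \<Sum>i<N. c i * w b * k (xs!i) (Z!b))" by (rule sum.swap)
    also have "\<dots> = ?T3" by (intro sum.cong refl) (simp add: ksym[of "xs!_"] mult_ac)
    finally show ?thesis using T3 by simp
  qed
  also have "?T4 = (\<Sum>a<M. w a * u a)"
  proof -
    have "?T4 = (\<Sum>a<M. w a * (\<Sum>b<M. k (Z!a) (Z!b) * w b))"
      by (simp add: sum_distrib_left mult_ac)
    also have "\<dots> = (\<Sum>a<M. w a * u a)"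
      by (intro sum.cong refl) (simp add: w_def BGv M_def)
    finally show ?thesis .
  qed
  also have "(\<Sum>a<M. w a * u a) = (\<Sum>i<N. \<Sum>j<N. c i * c j * Qf xs i j)"
  proof -
    have "(\<Sum>a<M. w a * u a) = (\<Sum>a<M. \<Sum>b<M. \<Sum>i<N. \<Sum>j<N.
              c j * k (xs!j) (Z!a) * G a b * k (Z!b) (xs!i) * c i)"
      by (simp add: w_def u_def sum_distrib_left sum_distrib_right ksym[of "Z!_" "xs!_"] mult_ac)
    also have "\<dots> = (\<Sum>i<N. \<Sum>j<N. \<Sum>a<M. \<Sum>b<M.
              c j * k (xs!j) (Z!a) * G a b * k (Z!b) (xs!i) * c i)"
      by (rule quad_swap[symmetric])
    also have "\<dots> = (\<Sum>i<N. \<Sum>j<N. c i * c j * Qf xs j i)"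
      by (simp add: Qf_def M_def sum_distrib_left sum_distrib_right mult_ac)
    also have "\<dots> = (\<Sum>j<N. \<Sum>i<N. c i * c j * Qf xs j i)" by (rule sum.swap)
    also have "\<dots> = (\<Sum>i<N. \<Sum>j<N. c i * c j * Qf xs i j)"
      by (simp add: Qf_def M_def sum_distrib_left sum_distrib_right mult_ac)
    finally show ?thesis .
  qed
  finally show ?thesis
    by (simp add: N_def right_diff_distrib sum_subtractf)
qed


lemma Qsym: "Qf xs i j = Qf xs j i"
proof -
  let ?M = "length Z"
  have "Qf xs j i = (\<Sum>b<?M. \<Sum>a<?M. k (xs!j) (Z!a) * G a b * k (Z!b) (xs!i))"
    unfolding Qf_def by (rule sum.swap)
  also have "\<dots> = Qf xs i j" unfolding Qf_def
    by (intro sum.cong refl) (simp add: Gsym ksym[of "xs!_"] mult_ac)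
  finally show ?thesis by simp
qed

lemma Q_inZ:
  assumes c0: "c0 < length Z" and eq: "xs!i = Z!c0"
  shows "Qf xs i i = k (Z!c0) (Z!c0)"
proof -
  let ?M = "length Z"
  have "Qf xs i i = (\<Sum>a<?M. k (Z!c0) (Z!a) * (\<Sum>b<?M. G a b * k (Z!b) (Z!c0)))"
    unfolding Qf_def eq by (simp add: sum_distrib_left mult_ac)
  also have "\<dots> = (\<Sum>a<?M. k (Z!c0) (Z!a) * (if a = c0 then 1 else 0))"
    by (intro sum.cong refl) (simp add: GB c0)
  also have "\<dots> = k (Z!c0) (Z!c0)" by (rule delta_sum_r[OF c0])
  finally show ?thesis .
qed

lemma Q_notinZ:
  fixes \<rho> :: real
  assumes diag: "\<And>x. k x x = 1" and nn: "\<And>x y. 0 \<le> k x y"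
    and rho: "0 < \<rho>" "\<rho> < 1"
    and off: "\<And>a b. a < length Z \<Longrightarrow> b < length Z \<Longrightarrow> a \<noteq> b \<Longrightarrow> k (Z!a) (Z!b) < \<rho>"
    and a0: "a0 < length Z" "\<rho> \<le> k (xs!i) (Z!a0)"
  shows "\<rho>^2 / (1 + real (length Z) * (real (length Z) - 1) * \<rho>) \<le> Qf xs i i"
proof -
  define M where "M = length Z"
  define v where "v a = k (Z!a) (xs!i)" for a
  define w where "w a = (\<Sum>b<M. G a b * v b)" for a
  define nv where "nv = (\<Sum>a<M. v a * v a)"
  define B where "B a b = k (Z!a) (Z!b)" for a b
  define Lc where "Lc = 1 + (real M - 1) * \<rho>"
  have vnn: "0 \<le> v a" for a by (simp add: v_def nn)
  have Bw: "(\<Sum>b<M. B a b * w b) = v a" if "a < M" for a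
    using BGv[of a v] that by (simp add: B_def w_def M_def)
  have Qv: "Qf xs i i = (\<Sum>a<M. v a * w a)"
    unfolding Qf_def w_def v_def M_def
    by (simp add: sum_distrib_left ksym[of "xs!_"] mult_ac)
  have wBw: "(\<Sum>a<M. \<Sum>b<M. w a * w b * B a b) = Qf xs i i"
  proof -
    have "(\<Sum>a<M. \<Sum>b<M. w a * w b * B a b) = (\<Sum>a<M. w a * (\<Sum>b<M. B a b * w b))"
      by (simp add: sum_distrib_left mult_ac)
    also have "\<dots> = (\<Sum>a<M. v a * w a)" by (intro sum.cong refl) (simp add: Bw)
    finally show ?thesis using Qv by simp
  qed
  have wBv: "(\<Sum>a<M. \<Sum>b<M. w a * v b * B a b) = nv"
  proof -
    have "(\<Sum>a<M. \<Sum>b<M. w a * v b * B a b) = (\<Sum>b<M. \<Sum>a<M. w a * v b * B a b)"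
      by (rule sum.swap)
    also have "\<dots> = (\<Sum>b<M. v b * (\<Sum>a<M. B b a * w a))"
      by (simp add: sum_distrib_left B_def ksym[of "Z!_" "Z!_"] mult_ac)
    also have "\<dots> = nv" unfolding nv_def by (intro sum.cong refl) (simp add: Bw)
    finally show ?thesis .
  qed
  have psd: "0 \<le> (\<Sum>a<M. \<Sum>b<M. c a * c b * B a b)" for c
    using psdB[of c] by (simp add: M_def B_def)
  have Bsym: "B a b = B b a" for a b by (simp add: B_def ksym)
  have cs: "nv^2 \<le> Qf xs i i * (\<Sum>a<M. \<Sum>b<M. v a * v b * B a b)"
    using form_cs[where n=M and A=B and x=w and y=v, OF psd Bsym] wBw wBv by simp
  have Qnn: "0 \<le> Qf xs i i" using psd[of w] wBw by simp
  have tmb: "v a * v b * B a b \<le> \<rho> * (v a * v a + v b * v b) / 2 + (if a = b then (1 - \<rho>) * (v a * v a) else 0)"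
    if "a < M" "b < M" for a b
  proof (cases "a = b")
    case True then show ?thesis by (simp add: B_def diag algebra_simps)
  next
    case False
    have "B a b < \<rho>" using off[of a b] that False by (simp add: B_def M_def)
    hence "v a * v b * B a b \<le> v a * v b * \<rho>"
      using vnn by (intro mult_left_mono) auto
    also have "\<dots> \<le> \<rho> * (v a * v a + v b * v b) / 2"
    proof -
      have "0 \<le> \<rho> * (v a - v b)^2" using rho by simp
      thus ?thesis by (simp add: power2_eq_square algebra_simps)
    qed
    finally show ?thesis using False by simp
  qed
  have vBv: "(\<Sum>a<M. \<Sum>b<M. v a * v b * B a b) \<le> Lc * nv"
  proof -
    have "(\<Sum>a<M. \<Sum>b<M. v a * v b * B a b) \<le>
        (\<Sum>a<M. \<Sum>b<M. \<rho> * (v a * v a + v b * v b) / 2 + (if a = b then (1 - \<rho>) * (v a * v a) else 0))"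
      by (intro sum_mono) (simp add: tmb)
    also have "\<dots> = (\<Sum>a<M. \<rho> * (real M * (v a * v a) + nv) / 2 + (1 - \<rho>) * (v a * v a))"
    proof (intro sum.cong refl)
      fix a assume "a \<in> {..<M}"
      then have aM: "a < M" by simp
      have "(\<Sum>b<M. \<rho> * (v a * v a + v b * v b) / 2) = \<rho> * (real M * (v a * v a) + nv) / 2"
        by (simp add: nv_def sum.distrib sum_divide_distrib[symmetric] sum_distrib_left[symmetric])
      moreover have "(\<Sum>b<M. (if a = b then (1 - \<rho>) * (v a * v a) else 0)) = (1 - \<rho>) * (v a * v a)"
        using aM by simp
      ultimately show "(\<Sum>b<M. \<rho> * (v a * v a + v b * v b) / 2 + (if a = b then (1 - \<rho>) * (v a * v a) else 0))
          = \<rho> * (real M * (v a * v a) + nv) / 2 + (1 - \<rho>) * (v a * v a)"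
        by (simp add: sum.distrib)
    qed
    also have "\<dots> = \<rho> * (real M * nv + real M * nv) / 2 + (1 - \<rho>) * nv"
      by (simp add: sum.distrib nv_def sum_divide_distrib[symmetric] sum_distrib_left[symmetric])
    also have "\<dots> = Lc * nv" by (simp add: Lc_def algebra_simps)
    finally show ?thesis .
  qed
  have nvge: "\<rho>^2 \<le> nv"
  proof -
    have "\<rho>^2 \<le> v a0 * v a0" using a0 rho by (simp add: v_def ksym[of "Z!_"] power2_eq_square mult_mono)
    also have "\<dots> \<le> nv" unfolding nv_def
      using a0 by (intro member_le_sum) (auto simp: vnn M_def)
    finally show ?thesis .
  qed
  have nvpos: "0 < nv" using nvge rho by (smt (verit) zero_less_power)
  have Lpos: "0 < Lc"
  proof -
    have "(-1) * \<rho> \<le> (real M - 1) * \<rho>" using rho by (intro mult_right_mono) auto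
    thus ?thesis using rho by (simp add: Lc_def)
  qed
  have "nv * nv \<le> Qf xs i i * (Lc * nv)"
    using cs vBv Qnn by (smt (verit) mult_left_mono power2_eq_square)
  hence "nv \<le> Qf xs i i * Lc" using nvpos by (simp add: mult_ac)
  hence "nv / Lc \<le> Qf xs i i" using Lpos by (simp add: divide_le_eq)
  moreover have "\<rho>^2 / (1 + real M * (real M - 1) * \<rho>) \<le> nv / Lc"
  proof -
    have "Lc \<le> 1 + real M * (real M - 1) * \<rho>"
    proof -
      have "0 \<le> (real M - 1)^2 * \<rho>" using rho by simp
      thus ?thesis by (simp add: Lc_def power2_eq_square algebra_simps)
    qed
    thus ?thesis using Lpos nvge rho nvpos
      by (intro frac_le) auto
  qed
  ultimately show ?thesis by (simp add: M_def)
qed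

end

lemma sum_nth_distinct:
  fixes g :: "'a \<Rightarrow> real"
  assumes "distinct xs"
  shows "(\<Sum>i<length xs. g (xs!i)) = sum g (set xs)"
proof -
  have "sum g (set xs) = sum_list (map g xs)" using assms by (rule sum.distinct_set_conv_list)
  also have "\<dots> = (\<Sum>i<length xs. g (xs!i))" by (simp add: sum_list_sum_nth atLeast0LessThan)
  finally show ?thesis by simp
qed

theorem theorem2:
  fixes k :: "real ^ 'd \<Rightarrow> real ^ 'd \<Rightarrow> real"
    and \<rho> :: real
    and xs :: "(real ^ 'd) list"
  assumes "pd_kernel k"
    and "translation_invariant k"
    and "\<And>x. k x x = 1"
    and "\<And>x y. 0 \<le> k x y \<and> k x y \<le> 1"
    and "0 < \<rho>" and "\<rho> < 1"
    and "distinct xs"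
    and "invertible_mat (kmat k (oips k \<rho> xs) (oips k \<rho> xs))"
  shows "frobenius_norm (kmat k xs xs - nystrom k xs (oips k \<rho> xs))
           \<le> (real (length xs) - real (length (oips k \<rho> xs))) *
              (1 - \<rho>\<^sup>2 / (1 + real (length (oips k \<rho> xs)) *
                             (real (length (oips k \<rho> xs)) - 1) * \<rho>))"
proof -
  note pd = assms(1) and diag = assms(3) and bnd = assms(4) and rho = assms(5,6)
    and dxs = assms(7) and inv = assms(8)
  define Z where "Z = oips k \<rho> xs"
  define N where "N = length xs"
  define M where "M = length Z"
  define C where "C = 1 - \<rho>\<^sup>2 / (1 + real M * (real M - 1) * \<rho>)"
  have sym: "\<And>x y. k x y = k y x" using pd unfolding pd_kernel_def by blast
  have oi: "set Z \<subseteq> set xs \<and> distinct Z \<and>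
    (\<forall>z1\<in>set Z. \<forall>z2\<in>set Z. z1 \<noteq> z2 \<longrightarrow> k z1 z2 < \<rho>) \<and>
    (\<forall>y\<in>set xs. y \<notin> set Z \<longrightarrow> (\<exists>z\<in>set Z. \<rho> \<le> k y z))"
    unfolding Z_def by (rule oips_inv[OF sym dxs])
  define B where "B = kmat k Z Z"
  define Gm where "Gm = inv_mat B"
  have "\<exists>G. inverts_mat B G \<and> inverts_mat G B" using inv unfolding invertible_mat_def B_def Z_def by blast
  hence GG: "inverts_mat B Gm \<and> inverts_mat Gm B" unfolding Gm_def inv_mat_def by (rule someI_ex)
  have dimB: "dim_row B = M" "dim_col B = M" by (simp_all add: B_def kmat_def M_def)
  have BGm: "B * Gm = 1\<^sub>m M" and GmB: "Gm * B = 1\<^sub>m (dim_row Gm)"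
    using GG dimB unfolding inverts_mat_def by auto
  have dimG: "dim_col Gm = M" "dim_row Gm = M"
    using arg_cong[OF BGm, of dim_col] arg_cong[OF GmB, of dim_col] dimB by simp_all
  define G where "G a b = Gm $$ (a, b)" for a b
  have Bent: "B $$ (a, b) = k (Z!a) (Z!b)" if "a < M" "b < M" for a b
    using that by (simp add: B_def kmat_def M_def)
  have BG: "(\<Sum>b<length Z. k (Z!a) (Z!b) * G b c) = (if a = c then 1 else 0)"
    if "a < length Z" "c < length Z" for a c
  proof -
    have "(B * Gm) $$ (a, c) = (if a = c then 1 else 0)" using BGm that by (simp add: M_def)
    moreover have "(B * Gm) $$ (a, c) = (\<Sum>b<length Z. k (Z!a) (Z!b) * G b c)"
      using that dimB dimG by (simp add: scalar_prod_def atLeast0LessThan Bent G_def M_def)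
    ultimately show ?thesis by simp
  qed
  have GB: "(\<Sum>b<length Z. G a b * k (Z!b) (Z!c)) = (if a = c then 1 else 0)"
    if "a < length Z" "c < length Z" for a c
  proof -
    have "(Gm * B) $$ (a, c) = (if a = c then 1 else 0)" using GmB that dimG by (simp add: M_def)
    moreover have "(Gm * B) $$ (a, c) = (\<Sum>b<length Z. G a b * k (Z!b) (Z!c))"
      using that dimB dimG by (simp add: scalar_prod_def atLeast0LessThan Bent G_def M_def)
    ultimately show ?thesis by simp
  qed
  define D where "D i j = k (xs!i) (xs!j) - Qf k Z G xs i j" for i j
  have nys: "nystrom k xs Z $$ (i, j) = Qf k Z G xs i j" if "i < N" "j < N" for i j
  proof -
    have "nystrom k xs Z $$ (i, j) =
      (\<Sum>b<M. (\<Sum>a<M. k (xs!i) (Z!a) * G a b) * k (Z!b) (xs!j))"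
      using that dimG unfolding nystrom_def B_def[symmetric] Gm_def[symmetric]
      by (simp add: kmat_def scalar_prod_def atLeast0LessThan G_def M_def N_def)
    also have "\<dots> = (\<Sum>b<M. \<Sum>a<M. k (xs!i) (Z!a) * G a b * k (Z!b) (xs!j))"
      by (simp add: sum_distrib_right)
    also have "\<dots> = (\<Sum>a<M. \<Sum>b<M. k (xs!i) (Z!a) * G a b * k (Z!b) (xs!j))"
      by (rule sum.swap)
    also have "\<dots> = Qf k Z G xs i j"
      unfolding M_def by (rule Qf_def[OF pd BG GB, symmetric])
    finally show ?thesis .
  qed
  have Dmat: "(kmat k xs xs - nystrom k xs Z) $$ (i, j) = D i j" if "i < N" "j < N" for i j
    using that nys by (simp add: D_def kmat_def nystrom_def N_def)
  have dimD: "dim_row (kmat k xs xs - nystrom k xs Z) = N" "dim_col (kmat k xs xs - nystrom k xs Z) = N"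
    by (simp_all add: kmat_def nystrom_def N_def)
  have frob: "frobenius_norm (kmat k xs xs - nystrom k xs Z) = sqrt (\<Sum>i<N. \<Sum>j<N. (D i j)^2)"
    unfolding frobenius_norm_def dimD by (simp add: Dmat)
  have psdD': "0 \<le> (\<Sum>i<N. \<Sum>j<N. c i * c j * D i j)" for c
    using psdD[OF pd BG GB, where xs=xs and c=c] by (simp add: D_def N_def)
  have symD: "D i j = D j i" for i j
    using Qsym[OF pd BG GB, where xs=xs and i=i and j=j] by (simp add: D_def sym)
  have "frobenius_norm (kmat k xs xs - nystrom k xs Z) \<le> (\<Sum>i<N. D i i)"
    unfolding frob by (rule frob_le_trace[OF psdD' symD])
  also have "\<dots> \<le> (\<Sum>i<N. (\<lambda>x. if x \<in> set Z then 0 else C) (xs!i))"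
  proof (intro sum_mono)
    fix i assume "i \<in> {..<N}"
    hence iN: "i < N" by simp
    show "D i i \<le> (\<lambda>x. if x \<in> set Z then 0 else C) (xs!i)"
    proof (cases "xs!i \<in> set Z")
      case True
      then obtain c0 where c0: "c0 < length Z" "Z!c0 = xs!i" by (auto simp: in_set_conv_nth)
      have "Qf k Z G xs i i = k (Z!c0) (Z!c0)"
        by (rule Q_inZ[OF pd BG GB c0(1) c0(2)[symmetric]])
      then show ?thesis using True by (simp add: D_def diag)
    next
      case False
      have "xs!i \<in> set xs" using iN by (simp add: N_def)
      then obtain z where z: "z \<in> set Z" "\<rho> \<le> k (xs!i) z" using oi False by blast
      then obtain a0 where a0: "a0 < length Z" "Z!a0 = z" by (auto simp: in_set_conv_nth)
      have off: "k (Z!a) (Z!b) < \<rho>" if "a < length Z" "b < length Z" "a \<noteq> b" for a b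
      proof -
        have "Z!a \<noteq> Z!b" using oi that by (simp add: nth_eq_iff_index_eq)
        thus ?thesis using oi that by auto
      qed
      have "\<rho>^2 / (1 + real (length Z) * (real (length Z) - 1) * \<rho>) \<le> Qf k Z G xs i i"
        by (rule Q_notinZ[OF pd BG GB diag _ rho off a0(1)]) (use bnd z a0 in auto)
      then show ?thesis using False by (simp add: D_def diag C_def M_def)
    qed
  qed
  also have "\<dots> = (\<Sum>x\<in>set xs. if x \<in> set Z then 0 else C)"
    unfolding N_def by (rule sum_nth_distinct[OF dxs])
  also have "\<dots> = (\<Sum>x\<in>set xs - set Z. C)"
    by (simp add: sum.If_cases Diff_eq)
  also have "\<dots> = (real N - real M) * C"
  proof -
    have "card (set xs - set Z) = card (set xs) - card (set Z)" using oi by (simp add: card_Diff_subset)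
    also have "\<dots> = N - M" using oi dxs by (simp add: distinct_card N_def M_def)
    finally have "card (set xs - set Z) = N - M" .
    moreover have "M \<le> N" using oi dxs
      by (metis M_def N_def card_mono distinct_card finite_set)
    ultimately show ?thesis by (simp add: of_nat_diff)
  qed
  finally show ?thesis by (simp add: Z_def N_def M_def C_def)
qed

end
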